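(* Let $B$ be a nonzero real constant and let $(x_n)_{n\ge0}$ be a (well-defined) solution of $$x_{n+10}=\frac{x_n}{-1+B\,x_nx_{n+2}x_{n+4}x_{n+6}x_{n+8}},\qquad n\ge 0,$$ with initial conditions $x_0,\dots,x_9$. Then the solution is periodic with period $20$, i.e. $x_{n+20}=x_n$ for all $n\ge 0$; explicitly, for $k\in\{0,\dots,9\}$ and $P_k=x_{\tau(k)}x_{\tau(k)+2}x_{\tau(k)+4}x_{\tau(k)+6}x_{\tau(k)+8}$, one has $x_{10+k}=x_k/(-1+BP_k)$ if $\lfloor k/2\rfloor$ is even and $x_{10+k}=x_k(-1+BP_k)$ if $\lfloor k/2\rfloor$ is odd.
   Context: $\tau(k)\in\{0,1\}$ is the remainder of $k$ upon division by $2$, and $\lfloor\cdot\rfloor$ is the floor function. *)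

theory Defs
  imports Complex_Main
begin

definition tau :: "nat \<Rightarrow> nat" where
  "tau k = k mod 2"

end

theory Submission
  imports Defs
begin

theorem theorem1:
  fixes B :: real and x :: "nat \<Rightarrow> real"
  assumes hB: "B \<noteq> 0"
    and wd: "\<forall>n. -1 + B * x n * x (n+2) * x (n+4) * x (n+6) * x (n+8) \<noteq> 0"
    and rec: "\<forall>n. x (n+10) = x n / (-1 + B * x n * x (n+2) * x (n+4) * x (n+6) * x (n+8))"
  shows "(\<forall>n. x (n+20) = x n) \<and>
    (\<forall>k<10. let P = x (tau k) * x (tau k + 2) * x (tau k + 4) * x (tau k + 6) * x (tau k + 8) in
       (even (k div 2) \<longrightarrow> x (10+k) = x k / (-1 + B * P)) \<and>
       (odd (k div 2) \<longrightarrow> x (10+k) = x k * (-1 + B * P)))"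
proof -
  define E where "E n = -1 + B * x n * x (n+2) * x (n+4) * x (n+6) * x (n+8)" for n
  have Enz: "E n \<noteq> 0" for n using wd E_def by simp
  have xr: "x (n+10) = x n / E n" for n using rec E_def by simp
  have E2: "E (n+2) = 1 / E n" for n
  proof -
    have "E (n+2) = -1 + B * x (n+2) * x (n+4) * x (n+6) * x (n+8) * x (n+10)"
      unfolding E_def by (simp add: ac_simps numeral_eq_Suc)
    also have "\<dots> = -1 + B * x (n+2) * x (n+4) * x (n+6) * x (n+8) * (x n / E n)"
      by (simp add: xr)
    also have "\<dots> = (- E n + B * x n * x (n+2) * x (n+4) * x (n+6) * x (n+8)) / E n"
      using Enz[of n] by (simp add: field_simps)
    also have "\<dots> = 1 / E n" by (simp add: E_def)
    finally show ?thesis .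
  qed
  have E4: "E (n+4) = E n" for n
  proof -
    have e: "n+4 = (n+2)+2" by simp
    show ?thesis unfolding e E2[of "n+2"] E2[of n] using Enz[of n] by simp
  qed
  have E10: "E (n+10) = 1 / E n" for n
  proof -
    have e: "n+10 = ((n+2)+4)+4" by simp
    show ?thesis unfolding e E4 E2 ..
  qed
  have per: "x (n+20) = x n" for n
  proof -
    have "x (n+20) = x (n+10) / E (n+10)" using xr[of "n+10"] by (simp add: add.assoc)
    also have "\<dots> = x n" using xr[of n] E10[of n] Enz[of n] by simp
    finally show ?thesis .
  qed
  have Ek: "E k = (if even (k div 2) then E (tau k) else 1 / E (tau k))" if "k < 10" for k
  proof -
    have "k \<in> {0,1,2,3,4,5,6,7,8,9}" using that by auto
    then show ?thesis
      using E2[of 0] E2[of 1] E4[of 0] E4[of 1] E4[of 2] E4[of 3] E4[of 4] E4[of 5]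
        E2[of 4] E2[of 5]
      by (auto simp: tau_def)
  qed
  show ?thesis
  proof (intro conjI allI impI)
    fix n show "x (n+20) = x n" by (rule per)
  next
    fix k :: nat assume k: "k < 10"
    have P: "-1 + B * (x (tau k) * x (tau k + 2) * x (tau k + 4) * x (tau k + 6) * x (tau k + 8)) = E (tau k)"
      by (simp add: E_def mult.assoc)
    show "let P = x (tau k) * x (tau k + 2) * x (tau k + 4) * x (tau k + 6) * x (tau k + 8) in
       (even (k div 2) \<longrightarrow> x (10+k) = x k / (-1 + B * P)) \<and>
       (odd (k div 2) \<longrightarrow> x (10+k) = x k * (-1 + B * P))"
      unfolding Let_def P using xr[of k] Ek[OF k] by (auto simp: add.commute)
  qed
qed

end
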